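(* In the sleeping multi-armed bandit setting, let $(\ell_t)_{t\ge1}$ be i.i.d. random loss vectors in $[0,1]^K$ with mean vector $\mu$, where for each $t$, $\ell_t$ is independent of everything determined before the learner observes $\ell_t(k_t)$ at round $t$ (including $S_1,\dots,S_t$ and $k_1,\dots,k_t$), and let the availability sets $(S_t)$ be arbitrary with $S_t$ depending only on the past. Let $\sigma^*$ be an ordering with $\mu_{\sigma^*_1}\le\mu_{\sigma^*_2}\le\dots\le\mu_{\sigma^*_K}$. Then for any algorithm and every $k\in[K]$, $$\mathbb E\big[R_T^{\mathrm{ext}}(k)\big]\le\mathbb E\big[R_T^{\mathrm{ordering}}(\sigma^* )\big].$$
   Context: Sleeping multi-armed bandit setting: $K$ arms $[K]$. At each round $t$ a nonempty availability set $S_t\subseteq[K]$ is revealed, the learner (possibly randomized, using only $S_1,\dots,S_t$, previously observed losses and internal randomness) selects $k_t\in S_t$ and observes $\ell_t(k_t)$. External sleeping regret: $R_T^{\mathrm{ext}}(k)=\sum_{t=1}^T\big(\ell_t(k_t)-\ell_t(k)\big)\mathbf 1\{k\in S_t\}$. An ordering is a permutation $\sigma=(\sigma_1,\dots,\sigma_K)$ of $[K]$; for nonempty $S\subseteq[K]$, $\sigma(S)=\sigma_m$ with $m=\min\{i:\sigma_i\in S\}$. Ordering regret: $R_T^{\mathrm{ordering}}(\sigma)=\sum_{t=1}^T\big(\ell_t(k_t)-\ell_t(\sigma(S_t))\big)$. *)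

theory Defs
  imports "HOL-Probability.Probability"
begin

text \<open>Arms are the elements of a finite type 'k (so K = CARD('k)).
  An ordering is a list enumerating every arm exactly once.\<close>

definition is_ordering :: "'k::finite list \<Rightarrow> bool" where
  "is_ordering \<sigma> \<longleftrightarrow> distinct \<sigma> \<and> set \<sigma> = UNIV"

definition ord_sel :: "'k list \<Rightarrow> 'k set \<Rightarrow> 'k" where
  "ord_sel \<sigma> S = hd (filter (\<lambda>x. x \<in> S) \<sigma>)"

definition ext_regret ::
  "nat \<Rightarrow> (nat \<Rightarrow> 'k \<Rightarrow> real) \<Rightarrow> (nat \<Rightarrow> 'k set) \<Rightarrow> (nat \<Rightarrow> 'k) \<Rightarrow> 'k \<Rightarrow> real" where
  "ext_regret T l S A k = (\<Sum>t\<in>{1..T}. (l t (A t) - l t k) * (if k \<in> S t then 1 else 0))"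

definition ordering_regret ::
  "nat \<Rightarrow> (nat \<Rightarrow> 'k \<Rightarrow> real) \<Rightarrow> (nat \<Rightarrow> 'k set) \<Rightarrow> (nat \<Rightarrow> 'k) \<Rightarrow> 'k list \<Rightarrow> real" where
  "ordering_regret T l S A \<sigma> = (\<Sum>t\<in>{1..T}. l t (A t) - l t (ord_sel \<sigma> (S t)))"

end

theory Submission
  imports Defs
begin

lemma (in prob_space) KL:
  fixes Lt :: "'a \<Rightarrow> 'k \<Rightarrow> real" and G :: "'a \<Rightarrow> real" and N :: "'a measure"
  assumes sub: "subalgebra M N"
    and Lm: "Lt \<in> M \<rightarrow>\<^sub>M (\<Pi>\<^sub>M j\<in>UNIV. borel)"
    and Lr: "\<And>\<omega> j. \<omega> \<in> space M \<Longrightarrow> 0 \<le> Lt \<omega> j \<and> Lt \<omega> j \<le> 1"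
    and ind: "indep_set (sets N) {Lt -` X \<inter> space M | X. X \<in> sets (\<Pi>\<^sub>M j\<in>UNIV. borel)}"
    and Gm: "G \<in> borel_measurable N"
    and Gb: "\<And>\<omega>. \<omega> \<in> space M \<Longrightarrow> \<bar>G \<omega>\<bar> \<le> C"
  shows "expectation (\<lambda>\<omega>. Lt \<omega> j * G \<omega>) = expectation (\<lambda>\<omega>. Lt \<omega> j) * expectation G"
proof -
  have spN: "space N = space M" and sN: "sets N \<subseteq> sets M" using sub by (auto simp: subalgebra_def)
  have GM: "G \<in> borel_measurable M" using measurable_from_subalg[OF sub Gm] .
  have LjM: "(\<lambda>\<omega>. Lt \<omega> j) \<in> borel_measurable M"
    using measurable_component_singleton'[OF Lm measurable_ident, of j] by simp
  let ?C = "{Lt -` X \<inter> space M | X. X \<in> sets (\<Pi>\<^sub>M j\<in>UNIV. borel)}"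
  have st: "Int_stable ?C"
  proof (rule Int_stableI)
    fix a b assume "a \<in> ?C" "b \<in> ?C"
    then obtain X Y where "a = Lt -` X \<inter> space M" "b = Lt -` Y \<inter> space M"
      "X \<in> sets (\<Pi>\<^sub>M j\<in>UNIV. borel)" "Y \<in> sets (\<Pi>\<^sub>M j\<in>UNIV. borel)" by blast
    then show "a \<inter> b \<in> ?C" by (intro CollectI exI[of _ "X \<inter> Y"]) auto
  qed
  have stN: "Int_stable (sets N)" by (rule Int_stableI) auto
  have ind2: "indep_set (sigma_sets (space M) (sets N)) (sigma_sets (space M) ?C)"
    by (rule indep_set_sigma_sets[OF ind stN st])
  have i: "indep_var borel G borel (\<lambda>\<omega>. Lt \<omega> j)"
    unfolding indep_var_eq
  proof (intro conjI GM LjM)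
    have s1: "sigma_sets (space M) {G -` A \<inter> space M |A. A \<in> sets borel} \<subseteq> sigma_sets (space M) (sets N)"
      apply (rule sigma_sets_mono')
      using Gm spN by (auto simp: measurable_def)
    have s2: "sigma_sets (space M) {(\<lambda>\<omega>. Lt \<omega> j) -` A \<inter> space M |A. A \<in> sets borel} \<subseteq> sigma_sets (space M) ?C"
    proof (rule sigma_sets_mono', safe)
      fix A :: "real set" assume A: "A \<in> sets borel"
      let ?X = "(\<lambda>f. f j) -` A \<inter> space (\<Pi>\<^sub>M j\<in>UNIV. (borel::real measure))"
      have "?X \<in> sets (\<Pi>\<^sub>M j\<in>UNIV. borel)"
        using measurable_component_singleton[of j UNIV "\<lambda>_. borel"] A by (auto simp: measurable_def)
      moreover have "(\<lambda>\<omega>. Lt \<omega> j) -` A \<inter> space M = Lt -` ?X \<inter> space M"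
        using measurable_space[OF Lm] by auto
      ultimately show "\<exists>X. (\<lambda>\<omega>. Lt \<omega> j) -` A \<inter> space M = Lt -` X \<inter> space M \<and> X \<in> sets (\<Pi>\<^sub>M j\<in>UNIV. borel)"
        by blast
    qed
    show "indep_set (sigma_sets (space M) {G -` A \<inter> space M |A. A \<in> sets borel})
        (sigma_sets (space M) {(\<lambda>\<omega>. Lt \<omega> j) -` A \<inter> space M |A. A \<in> sets borel})"
      using ind2 unfolding indep_set_def
      by (rule indep_sets_mono_sets) (use s1 s2 in \<open>auto split: bool.split\<close>)
  qed
  have iG: "integrable M G"
    by (rule integrable_const_bound[where B=C]) (use Gb GM in auto)
  have iL: "integrable M (\<lambda>\<omega>. Lt \<omega> j)"
    by (rule integrable_const_bound[where B=1]) (use Lr LjM in auto)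
  have "expectation (\<lambda>\<omega>. G \<omega> * Lt \<omega> j) = expectation G * expectation (\<lambda>\<omega>. Lt \<omega> j)"
    by (rule indep_var_lebesgue_integral[OF i iG iL])
  then show ?thesis by (simp add: mult.commute)
qed


lemma (in prob_space) KL2:
  fixes Lt :: "'a \<Rightarrow> 'k::finite \<Rightarrow> real" and N :: "'a measure"
    and At :: "'a \<Rightarrow> 'k" and St :: "'a \<Rightarrow> 'k set"
    and f :: "'k \<Rightarrow> 'k set \<Rightarrow> 'k" and g :: "'k \<Rightarrow> 'k set \<Rightarrow> real"
  assumes sub: "subalgebra M N"
    and Lm: "Lt \<in> M \<rightarrow>\<^sub>M (\<Pi>\<^sub>M j\<in>UNIV. borel)"
    and Lr: "\<And>\<omega> j. \<omega> \<in> space M \<Longrightarrow> 0 \<le> Lt \<omega> j \<and> Lt \<omega> j \<le> 1"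
    and ind: "indep_set (sets N) {Lt -` X \<inter> space M | X. X \<in> sets (\<Pi>\<^sub>M j\<in>UNIV. borel)}"
    and mu: "\<And>j. expectation (\<lambda>\<omega>. Lt \<omega> j) = \<mu> j"
    and Am: "At \<in> N \<rightarrow>\<^sub>M count_space UNIV"
    and Sm: "St \<in> N \<rightarrow>\<^sub>M count_space UNIV"
  shows "expectation (\<lambda>\<omega>. Lt \<omega> (f (At \<omega>) (St \<omega>)) * g (At \<omega>) (St \<omega>))
       = expectation (\<lambda>\<omega>. \<mu> (f (At \<omega>) (St \<omega>)) * g (At \<omega>) (St \<omega>))"
    and "integrable M (\<lambda>\<omega>. Lt \<omega> (f (At \<omega>) (St \<omega>)) * g (At \<omega>) (St \<omega>))"
    and "integrable M (\<lambda>\<omega>. \<mu> (f (At \<omega>) (St \<omega>)) * g (At \<omega>) (St \<omega>))"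
proof -
  have meas: "(\<lambda>\<omega>. \<phi> (At \<omega>) (St \<omega>)) \<in> borel_measurable N" for \<phi> :: "'k \<Rightarrow> 'k set \<Rightarrow> real"
  proof (rule measurable_compose_countable'[where I=UNIV and g=At and f="\<lambda>a \<omega>. \<phi> a (St \<omega>)"])
    fix a
    show "(\<lambda>\<omega>. \<phi> a (St \<omega>)) \<in> borel_measurable N"
      by (rule measurable_compose_countable'[where I=UNIV and g=St and f="\<lambda>s \<omega>. \<phi> a s"])
         (auto simp: Sm)
  qed (auto simp: Am)
  have spN: "space N = space M" using sub by (auto simp: subalgebra_def)
  define C where "C = (\<Sum>p\<in>UNIV. \<bar>g (fst p) (snd p)\<bar>)"
  have gb: "\<bar>g a s\<bar> \<le> C" for a s
    unfolding C_def using member_le_sum[of "(a,s)" UNIV "\<lambda>p. \<bar>g (fst p) (snd p)\<bar>"] by auto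
  define G where "G j \<omega> = (if f (At \<omega>) (St \<omega>) = j then g (At \<omega>) (St \<omega>) else 0)" for j \<omega>
  have Gm: "G j \<in> borel_measurable N" for j
    unfolding G_def using meas[of "\<lambda>a s. if f a s = j then g a s else 0"] by simp
  have GM: "G j \<in> borel_measurable M" for j using measurable_from_subalg[OF sub Gm] .
  have C0: "0 \<le> C" using gb[of undefined undefined] by linarith
  have Gb: "\<bar>G j \<omega>\<bar> \<le> C" for j \<omega> unfolding G_def using gb[of "At \<omega>" "St \<omega>"] C0 by auto
  have LjM: "(\<lambda>\<omega>. Lt \<omega> j) \<in> borel_measurable M" for j
    using measurable_component_singleton'[OF Lm measurable_ident, of j] by simp
  have iLG: "integrable M (\<lambda>\<omega>. Lt \<omega> j * G j \<omega>)" for j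
  proof (rule integrable_const_bound[where B=C])
    show "AE x in M. norm (Lt x j * G j x) \<le> C"
    proof (rule AE_I2)
      fix x assume x: "x \<in> space M"
      have "\<bar>Lt x j\<bar> * \<bar>G j x\<bar> \<le> 1 * C"
        using Lr[OF x, of j] Gb[of j x] C0 by (intro mult_mono) auto
      then show "norm (Lt x j * G j x) \<le> C" by (simp add: abs_mult)
    qed
  qed (use LjM GM in auto)
  have iG: "integrable M (G j)" for j
    by (rule integrable_const_bound[where B=C]) (use Gb GM in auto)
  have e1: "(\<lambda>\<omega>. Lt \<omega> (f (At \<omega>) (St \<omega>)) * g (At \<omega>) (St \<omega>)) = (\<lambda>\<omega>. \<Sum>j\<in>UNIV. Lt \<omega> j * G j \<omega>)"
    by (rule ext) (simp add: G_def if_distrib[of "\<lambda>x. _ * x"] cong: if_cong)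
  have e2: "(\<lambda>\<omega>. \<mu> (f (At \<omega>) (St \<omega>)) * g (At \<omega>) (St \<omega>)) = (\<lambda>\<omega>. \<Sum>j\<in>UNIV. \<mu> j * G j \<omega>)"
    by (rule ext) (simp add: G_def if_distrib[of "\<lambda>x. _ * x"] cong: if_cong)
  show i1: "integrable M (\<lambda>\<omega>. Lt \<omega> (f (At \<omega>) (St \<omega>)) * g (At \<omega>) (St \<omega>))"
    unfolding e1 using iLG by auto
  show i2: "integrable M (\<lambda>\<omega>. \<mu> (f (At \<omega>) (St \<omega>)) * g (At \<omega>) (St \<omega>))"
    unfolding e2 using iG by auto
  have "expectation (\<lambda>\<omega>. \<Sum>j\<in>UNIV. Lt \<omega> j * G j \<omega>) = (\<Sum>j\<in>UNIV. expectation (\<lambda>\<omega>. Lt \<omega> j * G j \<omega>))"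
    by (rule Bochner_Integration.integral_sum[where I=UNIV and f="\<lambda>j \<omega>. Lt \<omega> j * G j \<omega>"]) (use iLG in auto)
  also have "\<dots> = (\<Sum>j\<in>UNIV. \<mu> j * expectation (G j))"
    using KL[OF sub Lm Lr ind Gm, where C=C] Gb mu by simp
  also have "\<dots> = (\<Sum>j\<in>UNIV. expectation (\<lambda>\<omega>. \<mu> j * G j \<omega>))" by simp
  also have "\<dots> = expectation (\<lambda>\<omega>. \<Sum>j\<in>UNIV. \<mu> j * G j \<omega>)"
    by (rule Bochner_Integration.integral_sum[where I=UNIV and f="\<lambda>j \<omega>. \<mu> j * G j \<omega>", symmetric]) (use iG in auto)
  finally show "expectation (\<lambda>\<omega>. Lt \<omega> (f (At \<omega>) (St \<omega>)) * g (At \<omega>) (St \<omega>))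
       = expectation (\<lambda>\<omega>. \<mu> (f (At \<omega>) (St \<omega>)) * g (At \<omega>) (St \<omega>))"
    unfolding e1 e2 .
qed


lemma ord_sel_min:
  fixes \<sigma> :: "'k::finite list" and \<mu> :: "'k \<Rightarrow> real"
  assumes "is_ordering \<sigma>" "sorted (map \<mu> \<sigma>)" "a \<in> s"
  shows "\<mu> (ord_sel \<sigma> s) \<le> \<mu> a"
proof -
  let ?ys = "filter (\<lambda>x. x \<in> s) \<sigma>"
  have a: "a \<in> set ?ys" using assms(1,3) by (auto simp: is_ordering_def)
  have so: "sorted (map \<mu> ?ys)" using sorted_filter[OF assms(2)] .
  obtain y ys where ys: "?ys = y # ys" using a by (cases ?ys) auto
  show ?thesis unfolding ord_sel_def ys using so a unfolding ys by auto
qed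

theorem mainTheorem5:
  fixes M :: "'a measure"
    and F :: "nat \<Rightarrow> 'a measure"
    and L :: "nat \<Rightarrow> 'a \<Rightarrow> 'k::finite \<Rightarrow> real"
    and S :: "nat \<Rightarrow> 'a \<Rightarrow> 'k set"
    and A :: "nat \<Rightarrow> 'a \<Rightarrow> 'k"
    and \<mu> :: "'k \<Rightarrow> real"
    and \<sigma>s :: "'k list"
    and T :: nat and k :: 'k
  assumes "prob_space M"
    \<comment> \<open>F t: everything determined before the learner observes its loss at round t\<close>
    and F_sub: "\<And>t. subalgebra M (F t)"
    and F_mono: "\<And>s t. s \<le> t \<Longrightarrow> subalgebra (F t) (F s)"
    \<comment> \<open>losses: i.i.d. random vectors in [0,1]^K with mean \<mu>\<close>
    and L_meas: "\<And>t. L t \<in> M \<rightarrow>\<^sub>M (\<Pi>\<^sub>M j\<in>UNIV. borel)"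
    and L_indep: "prob_space.indep_vars M (\<lambda>_. \<Pi>\<^sub>M j\<in>UNIV. borel) L UNIV"
    and L_ident: "\<And>t. distr M (\<Pi>\<^sub>M j\<in>UNIV. borel) (L t) = distr M (\<Pi>\<^sub>M j\<in>UNIV. borel) (L 1)"
    and L_range: "\<And>t \<omega> j. \<omega> \<in> space M \<Longrightarrow> 0 \<le> L t \<omega> j \<and> L t \<omega> j \<le> 1"
    and L_mean: "\<And>t j. prob_space.expectation M (\<lambda>\<omega>. L t \<omega> j) = \<mu> j"
    \<comment> \<open>availability sets and the learner's choices are determined before round-t loss is observed\<close>
    and S_meas: "\<And>t. S t \<in> F t \<rightarrow>\<^sub>M count_space UNIV"
    and A_meas: "\<And>t. A t \<in> F t \<rightarrow>\<^sub>M count_space UNIV"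
    and obs_meas: "\<And>s t. s < t \<Longrightarrow> (\<lambda>\<omega>. L s \<omega> (A s \<omega>)) \<in> borel_measurable (F t)"
    and S_ne: "\<And>t \<omega>. \<omega> \<in> space M \<Longrightarrow> S t \<omega> \<noteq> {}"
    and A_in: "\<And>t \<omega>. \<omega> \<in> space M \<Longrightarrow> A t \<omega> \<in> S t \<omega>"
    \<comment> \<open>the round-t loss vector is independent of everything determined before\<close>
    and L_indep_past: "\<And>t. prob_space.indep_set M (sets (F t))
        {L t -` X \<inter> space M | X. X \<in> sets (\<Pi>\<^sub>M j\<in>UNIV. borel)}"
    \<comment> \<open>\<sigma>* orders the arms by increasing mean\<close>
    and \<sigma>s_ord: "is_ordering \<sigma>s"
    and \<sigma>s_sorted: "sorted (map \<mu> \<sigma>s)"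
  shows "prob_space.expectation M (\<lambda>\<omega>. ext_regret T (\<lambda>t. L t \<omega>) (\<lambda>t. S t \<omega>) (\<lambda>t. A t \<omega>) k)
       \<le> prob_space.expectation M (\<lambda>\<omega>. ordering_regret T (\<lambda>t. L t \<omega>) (\<lambda>t. S t \<omega>) (\<lambda>t. A t \<omega>) \<sigma>s)"
  proof -
  interpret prob_space M by fact
  have Lr: "\<And>\<omega> j. \<omega> \<in> space M \<Longrightarrow> 0 \<le> L t \<omega> j \<and> L t \<omega> j \<le> 1" for t using L_range by blast
  note K = KL2[OF F_sub L_meas Lr L_indep_past L_mean A_meas S_meas]
  define ind where "ind s = (if k \<in> s then 1 else (0::real))" for s :: "'k set"
  have K1: "expectation (\<lambda>\<omega>. L t \<omega> (A t \<omega>) * ind (S t \<omega>)) = expectation (\<lambda>\<omega>. \<mu> (A t \<omega>) * ind (S t \<omega>))"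
    "integrable M (\<lambda>\<omega>. L t \<omega> (A t \<omega>) * ind (S t \<omega>))"
    "integrable M (\<lambda>\<omega>. \<mu> (A t \<omega>) * ind (S t \<omega>))" for t
    using K[where f="\<lambda>a s. a" and g="\<lambda>a s. ind s", of t] by auto
  have K2: "expectation (\<lambda>\<omega>. L t \<omega> k * ind (S t \<omega>)) = expectation (\<lambda>\<omega>. \<mu> k * ind (S t \<omega>))"
    "integrable M (\<lambda>\<omega>. L t \<omega> k * ind (S t \<omega>))"
    "integrable M (\<lambda>\<omega>. \<mu> k * ind (S t \<omega>))" for t
    using K[where f="\<lambda>a s. k" and g="\<lambda>a s. ind s", of t] by auto
  have K3: "expectation (\<lambda>\<omega>. L t \<omega> (A t \<omega>)) = expectation (\<lambda>\<omega>. \<mu> (A t \<omega>))"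
    "integrable M (\<lambda>\<omega>. L t \<omega> (A t \<omega>))"
    "integrable M (\<lambda>\<omega>. \<mu> (A t \<omega>))" for t
    using K[where f="\<lambda>a s. a" and g="\<lambda>a s. 1", of t] by auto
  have K4: "expectation (\<lambda>\<omega>. L t \<omega> (ord_sel \<sigma>s (S t \<omega>))) = expectation (\<lambda>\<omega>. \<mu> (ord_sel \<sigma>s (S t \<omega>)))"
    "integrable M (\<lambda>\<omega>. L t \<omega> (ord_sel \<sigma>s (S t \<omega>)))"
    "integrable M (\<lambda>\<omega>. \<mu> (ord_sel \<sigma>s (S t \<omega>)))" for t
    using K[where f="\<lambda>a s. ord_sel \<sigma>s s" and g="\<lambda>a s. 1", of t] by auto
  have "expectation (\<lambda>\<omega>. ext_regret T (\<lambda>t. L t \<omega>) (\<lambda>t. S t \<omega>) (\<lambda>t. A t \<omega>) k)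
      = expectation (\<lambda>\<omega>. \<Sum>t\<in>{1..T}. L t \<omega> (A t \<omega>) * ind (S t \<omega>) - L t \<omega> k * ind (S t \<omega>))"
    unfolding ext_regret_def ind_def by (simp add: left_diff_distrib)
  also have "\<dots> = (\<Sum>t\<in>{1..T}. expectation (\<lambda>\<omega>. L t \<omega> (A t \<omega>) * ind (S t \<omega>) - L t \<omega> k * ind (S t \<omega>)))"
    by (rule Bochner_Integration.integral_sum) (use K1 K2 in auto)
  also have "\<dots> = (\<Sum>t\<in>{1..T}. expectation (\<lambda>\<omega>. \<mu> (A t \<omega>) * ind (S t \<omega>) - \<mu> k * ind (S t \<omega>)))"
    using K1 K2 by (simp add: Bochner_Integration.integral_diff)
  also have "\<dots> \<le> (\<Sum>t\<in>{1..T}. expectation (\<lambda>\<omega>. \<mu> (A t \<omega>) - \<mu> (ord_sel \<sigma>s (S t \<omega>))))"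
  proof (rule sum_mono, rule integral_mono)
    fix t
    show "integrable M (\<lambda>\<omega>. \<mu> (A t \<omega>) * ind (S t \<omega>) - \<mu> k * ind (S t \<omega>))" using K1 K2 by auto
    show "integrable M (\<lambda>\<omega>. \<mu> (A t \<omega>) - \<mu> (ord_sel \<sigma>s (S t \<omega>)))" using K3 K4 by auto
    fix \<omega> assume w: "\<omega> \<in> space M"
    have "\<mu> (ord_sel \<sigma>s (S t \<omega>)) \<le> \<mu> (A t \<omega>)"
      using ord_sel_min[OF \<sigma>s_ord \<sigma>s_sorted A_in[OF w]] .
    moreover have "k \<in> S t \<omega> \<Longrightarrow> \<mu> (ord_sel \<sigma>s (S t \<omega>)) \<le> \<mu> k"
      using ord_sel_min[OF \<sigma>s_ord \<sigma>s_sorted] by blast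
    ultimately show "\<mu> (A t \<omega>) * ind (S t \<omega>) - \<mu> k * ind (S t \<omega>) \<le> \<mu> (A t \<omega>) - \<mu> (ord_sel \<sigma>s (S t \<omega>))"
      unfolding ind_def by auto
  qed
  also have "\<dots> = (\<Sum>t\<in>{1..T}. expectation (\<lambda>\<omega>. L t \<omega> (A t \<omega>) - L t \<omega> (ord_sel \<sigma>s (S t \<omega>))))"
    using K3 K4 by (simp add: Bochner_Integration.integral_diff)
  also have "\<dots> = expectation (\<lambda>\<omega>. ordering_regret T (\<lambda>t. L t \<omega>) (\<lambda>t. S t \<omega>) (\<lambda>t. A t \<omega>) \<sigma>s)"
    unfolding ordering_regret_def
    by (rule Bochner_Integration.integral_sum[symmetric]) (use K3 K4 in auto)
  finally show ?thesis .
qed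

end
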